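(* Let $N\ge 2$ and $A,B,C>0$ with $B>(N-1)C$, and define $D_i^N(p_1,\ldots,p_N)=A-Bp_i+C\sum_{j\ne i}p_j$ for $i=1,\ldots,N$. Define lower-level demand functions recursively by $D_i^n(p_1,\ldots,p_n)=D_i^{n+1}(p_1,\ldots,p_n,\hat p_{n+1})$ for $i\le n$, where $\hat p_{n+1}(p_1,\ldots,p_n)$ solves $D^{n+1}_{n+1}(p_1,\ldots,p_n,\hat p_{n+1})=0$. Then for each $n\in\{1,\ldots,N-1\}$, $$D_i^n(p_1,\ldots,p_n)=a_n-b_np_i+c_n\sum_{j\le n,\,j\ne i}p_j,\qquad i=1,\ldots,n,$$ where $a_N=A$, $b_N=B$, $c_N=C$ and, for $2\le n\le N$, $$a_{n-1}=a_n\Big(1+\frac{c_n}{b_n}\Big),\quad b_{n-1}=b_n\Big(1-\frac{c_n^2}{b_n^2}\Big),\quad c_{n-1}=c_n\Big(1+\frac{c_n}{b_n}\Big).$$ *)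

theory Defs
  imports Complex_Main
begin

text \<open>Prices are vectors p :: nat => real, of which only the entries p 1, ..., p n
  matter at level n.  demK N A B C k i p is the demand function of firm i at level N - k:
  level N is the top-level linear demand; level n is obtained from level n+1 by
  substituting p (n+1) := phat, where phat is the (THE) solution x of
  D^(n+1)_(n+1)(p_1,...,p_n,x) = 0.\<close>

primrec demK :: "nat \<Rightarrow> real \<Rightarrow> real \<Rightarrow> real \<Rightarrow> nat \<Rightarrow> nat \<Rightarrow> (nat \<Rightarrow> real) \<Rightarrow> real" where
  "demK N A B C 0 i p = A - B * p i + C * (\<Sum>j\<in>{1..N} - {i}. p j)"
| "demK N A B C (Suc k) i p =
     demK N A B C k i (p(N - k := (THE x. demK N A B C k (N - k) (p(N - k := x)) = 0)))"

definition demand :: "nat \<Rightarrow> real \<Rightarrow> real \<Rightarrow> real \<Rightarrow> nat \<Rightarrow> nat \<Rightarrow> (nat \<Rightarrow> real) \<Rightarrow> real" where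
  "demand N A B C n i p = demK N A B C (N - n) i p"

primrec coefK :: "real \<Rightarrow> real \<Rightarrow> real \<Rightarrow> nat \<Rightarrow> real \<times> real \<times> real" where
  "coefK A B C 0 = (A, B, C)"
| "coefK A B C (Suc k) =
     (case coefK A B C k of (a, b, c) \<Rightarrow>
        (a * (1 + c / b), b * (1 - c\<^sup>2 / b\<^sup>2), c * (1 + c / b)))"

definition coef_a :: "nat \<Rightarrow> real \<Rightarrow> real \<Rightarrow> real \<Rightarrow> nat \<Rightarrow> real" where
  "coef_a N A B C n = fst (coefK A B C (N - n))"
definition coef_b :: "nat \<Rightarrow> real \<Rightarrow> real \<Rightarrow> real \<Rightarrow> nat \<Rightarrow> real" where
  "coef_b N A B C n = fst (snd (coefK A B C (N - n)))"
definition coef_c :: "nat \<Rightarrow> real \<Rightarrow> real \<Rightarrow> real \<Rightarrow> nat \<Rightarrow> real" where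
  "coef_c N A B C n = snd (snd (coefK A B C (N - n)))"

end

theory Submission
  imports Defs
begin

lemma coef_inv:
  assumes "B > 0" "C > 0" "B > real (N - 1) * C" "k \<le> N - 1"
  shows "fst (snd (coefK A B C k)) > 0 \<and> snd (snd (coefK A B C k)) > 0 \<and>
         fst (snd (coefK A B C k)) > real (N - 1 - k) * snd (snd (coefK A B C k))"
  using assms(4)
proof (induction k)
  case 0
  then show ?case using assms by simp
next
  case (Suc k)
  obtain a b c where abc: "coefK A B C k = (a, b, c)" by (metis prod.exhaust)
  from Suc abc have b: "b > 0" and c: "c > 0" and bc: "b > real (N - 1 - k) * c" by auto
  have k1: "N - 1 - k \<ge> 1" using Suc by auto
  have "real (N - 1 - k) = real (N - 1 - Suc k) + 1" using k1 by simp
  with bc have bc2: "b - c > real (N - 1 - Suc k) * c" by (simp add: algebra_simps)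
  have cb: "c < b" using bc2 c by (smt (verit) mult_nonneg_nonneg of_nat_0_le_iff)
  have r: "c / b < 1" using cb b by simp
  have r0: "c / b > 0" using b c by simp
  have e1: "b * (1 - c\<^sup>2 / b\<^sup>2) = (b - c) * (1 + c / b)" using b
    by (simp add: field_simps power2_eq_square)
  have pos1: "b * (1 - c\<^sup>2 / b\<^sup>2) > 0" unfolding e1 using cb r0 by simp
  have pos2: "c * (1 + c / b) > 0" using c r0 by simp
  have "(b - c) * (1 + c / b) > real (N - 1 - Suc k) * c * (1 + c / b)"
    using bc2 r0 by (intro mult_strict_right_mono) auto
  then show ?case using abc pos1 pos2 e1 by (simp add: mult.assoc)
qed

lemma main:
  assumes "B > 0" "C > 0" "B > real (N - 1) * C" "k \<le> N - 1"
  shows "\<forall>i p. 1 \<le> i \<and> i \<le> N - k \<longrightarrow> demK N A B C k i p =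
           fst (coefK A B C k) - fst (snd (coefK A B C k)) * p i
           + snd (snd (coefK A B C k)) * (\<Sum>j\<in>{1..N - k} - {i}. p j)"
  using assms(4)
proof (induction k)
  case 0
  then show ?case by simp
next
  case (Suc k)
  obtain a b c where abc: "coefK A B C k = (a, b, c)" by (metis prod.exhaust)
  have inv: "b > 0 \<and> c > 0 \<and> b > real (N - 1 - k) * c"
    using coef_inv[OF assms(1-3), of k A] Suc.prems abc by auto
  then have b: "b > 0" by auto
  define m where "m = N - k"
  have m2: "m \<ge> 2" using Suc.prems m_def by auto
  have IH: "\<And>i p. 1 \<le> i \<Longrightarrow> i \<le> m \<Longrightarrow> demK N A B C k i p =
           a - b * p i + c * (\<Sum>j\<in>{1..m} - {i}. p j)"
    using Suc abc m_def by auto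
  have setm: "{1..m} - {m} = {1..m-1}" using m2 by auto
  show ?case
  proof (intro allI impI)
    fix i and p :: "nat \<Rightarrow> real" assume i: "1 \<le> i \<and> i \<le> N - Suc k"
    then have im: "i < m" "1 \<le> i" using m_def by auto
    define S where "S = (\<Sum>j\<in>{1..m-1}. p j)"
    define x0 where "x0 = (a + c * S) / b"
    have sumeq: "\<And>x. (\<Sum>j\<in>{1..m} - {m}. (p(m := x)) j) = S"
      unfolding setm S_def by (intro sum.cong) auto
    have eqx: "\<And>x. demK N A B C k m (p(m := x)) = a - b * x + c * S"
      using IH[of m] m2 sumeq by simp
    have the: "(THE x. demK N A B C k m (p(m := x)) = 0) = x0"
    proof (rule the_equality)
      show "demK N A B C k m (p(m := x0)) = 0" unfolding eqx x0_def using b by simp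
    next
      fix x assume "demK N A B C k m (p(m := x)) = 0"
      then have "a - b * x + c * S = 0" using eqx by simp
      then show "x = x0" unfolding x0_def using b by (simp add: field_simps)
    qed
    define S' where "S' = (\<Sum>j\<in>{1..m-1} - {i}. p j)"
    have s1: "{1..m} - {i} = insert m ({1..m-1} - {i})" using im m2 by auto
    have s2: "(\<Sum>j\<in>{1..m} - {i}. (p(m := x0)) j) = x0 + S'"
      unfolding s1 S'_def by (subst sum.insert) (auto split: if_splits intro!: sum.cong)
    have s3: "S = p i + S'" unfolding S_def S'_def
      using im by (subst sum.remove[of _ i]) auto
    have "demK N A B C (Suc k) i p = demK N A B C k i (p(m := x0))"
      using the m_def by simp
    also have "\<dots> = a - b * p i + c * (x0 + S')"
      using IH[of i "p(m := x0)"] im s2 by simp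
    also have "\<dots> = a * (1 + c / b) - b * (1 - c\<^sup>2 / b\<^sup>2) * p i + c * (1 + c / b) * S'"
      unfolding x0_def s3 using b by (simp add: field_simps power2_eq_square)
    finally show "demK N A B C (Suc k) i p =
           fst (coefK A B C (Suc k)) - fst (snd (coefK A B C (Suc k))) * p i
           + snd (snd (coefK A B C (Suc k))) * (\<Sum>j\<in>{1..N - Suc k} - {i}. p j)"
      using abc S'_def m_def by (simp add: Suc_diff_Suc numeral_2_eq_2)
  qed
qed

theorem proposition2p4:
  fixes N n i :: nat and A B C :: real and p :: "nat \<Rightarrow> real"
  assumes "N \<ge> 2" and "A > 0" and "B > 0" and "C > 0"
    and "B > real (N - 1) * C"
    and "1 \<le> n" and "n \<le> N - 1"
    and "1 \<le> i" and "i \<le> n"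
  shows "demand N A B C n i p =
           coef_a N A B C n - coef_b N A B C n * p i
           + coef_c N A B C n * (\<Sum>j\<in>{1..n} - {i}. p j)"
proof -
  have "N - n \<le> N - 1" using assms by auto
  from main[OF assms(3,4,5) this, of A] have
    "demK N A B C (N - n) i p = fst (coefK A B C (N - n)) - fst (snd (coefK A B C (N - n))) * p i
           + snd (snd (coefK A B C (N - n))) * (\<Sum>j\<in>{1..N - (N - n)} - {i}. p j)"
    using assms by auto
  moreover have "N - (N - n) = n" using assms by auto
  ultimately show ?thesis unfolding demand_def coef_a_def coef_b_def coef_c_def by simp
qed

end
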